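(* For every positive integer $l$ there exists a graph of order $2l$ and size $(l+2)(l+1)/2-2$ that admits a regular distance $l$-labeling of degree $2$.
   Context: All graphs are finite and simple; $d(u,v)$ denotes the usual graph distance; order means number of vertices and size means number of edges. For integers $m\le n$, $[m,n]=\{m,m+1,\ldots,n\}$. For a graph $G$ and a positive integer $l$, a distance $l$-labeling of $G$ is a function $f:V(G)\to[0,l]$ such that (i) $f(V(G))=[0,l]$ or $f(V(G))=[1,l]$, and (ii) whenever two distinct vertices $u,v$ satisfy $f(u)=f(v)=k$, we have $d(u,v)=k$. A distance $l$-labeling is regular of degree $r$ if for every $k\in[1,l]$ there are exactly $r$ vertices labeled $k$. *)

theory Defs
  imports Main
begin

definition simple_graph :: "'a set \<Rightarrow> ('a \<Rightarrow> 'a \<Rightarrow> bool) \<Rightarrow> bool" where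
  "simple_graph V E \<longleftrightarrow> finite V \<and> (\<forall>u v. E u v \<longrightarrow> u \<in> V \<and> v \<in> V)
     \<and> (\<forall>u v. E u v \<longrightarrow> E v u) \<and> (\<forall>u. \<not> E u u)"

definition graph_order :: "'a set \<Rightarrow> ('a \<Rightarrow> 'a \<Rightarrow> bool) \<Rightarrow> nat" where
  "graph_order V E = card V"

definition graph_size :: "'a set \<Rightarrow> ('a \<Rightarrow> 'a \<Rightarrow> bool) \<Rightarrow> nat" where
  "graph_size V E = card {{u, v} | u v. u \<in> V \<and> v \<in> V \<and> E u v}"

text \<open>A walk given as a nonempty list of vertices, consecutive ones adjacent; its length is length xs - 1.\<close>
definition is_walk :: "'a set \<Rightarrow> ('a \<Rightarrow> 'a \<Rightarrow> bool) \<Rightarrow> 'a list \<Rightarrow> bool" where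
  "is_walk V E xs \<longleftrightarrow> xs \<noteq> [] \<and> set xs \<subseteq> V \<and> (\<forall>i. Suc i < length xs \<longrightarrow> E (xs ! i) (xs ! Suc i))"

definition graph_dist_is :: "'a set \<Rightarrow> ('a \<Rightarrow> 'a \<Rightarrow> bool) \<Rightarrow> 'a \<Rightarrow> 'a \<Rightarrow> nat \<Rightarrow> bool" where
  "graph_dist_is V E u v k \<longleftrightarrow>
     (\<exists>xs. is_walk V E xs \<and> hd xs = u \<and> last xs = v \<and> length xs = Suc k) \<and>
     (\<forall>xs. is_walk V E xs \<and> hd xs = u \<and> last xs = v \<longrightarrow> Suc k \<le> length xs)"

definition distance_labeling :: "'a set \<Rightarrow> ('a \<Rightarrow> 'a \<Rightarrow> bool) \<Rightarrow> nat \<Rightarrow> ('a \<Rightarrow> nat) \<Rightarrow> bool" where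
  "distance_labeling V E l f \<longleftrightarrow>
     (f ` V = {0..l} \<or> f ` V = {1..l}) \<and>
     (\<forall>u\<in>V. \<forall>v\<in>V. u \<noteq> v \<and> f u = f v \<longrightarrow> graph_dist_is V E u v (f u))"

definition regular_distance_labeling :: "'a set \<Rightarrow> ('a \<Rightarrow> 'a \<Rightarrow> bool) \<Rightarrow> nat \<Rightarrow> nat \<Rightarrow> ('a \<Rightarrow> nat) \<Rightarrow> bool" where
  "regular_distance_labeling V E l r f \<longleftrightarrow>
     distance_labeling V E l f \<and> (\<forall>k\<in>{1..l}. card {v \<in> V. f v = k} = r)"

end

theory Submission
  imports Defs
begin

lemma walk_lip:
  assumes "is_walk V E xs" and lip: "\<And>x y. E x y \<Longrightarrow> \<bar>\<phi> x - \<phi> y\<bar> \<le> (1::int)"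
  shows "\<bar>\<phi> (hd xs) - \<phi> (last xs)\<bar> \<le> int (length xs) - 1"
  using assms(1)
proof (induction xs)
  case Nil then show ?case by (simp add: is_walk_def)
next
  case (Cons x xs)
  show ?case
  proof (cases "xs = []")
    case True then show ?thesis by simp
  next
    case False
    have w: "is_walk V E xs" using Cons.prems False unfolding is_walk_def
      by (auto simp: nth_Cons_Suc)
    have e: "E x (hd xs)" using Cons.prems False unfolding is_walk_def
      by (metis Suc_less_eq hd_conv_nth length_Cons length_greater_0_conv nth_Cons_0 nth_Cons_Suc)
    have "\<bar>\<phi> (hd xs) - \<phi> (last xs)\<bar> \<le> int (length xs) - 1" using Cons.IH w .
    moreover have "\<bar>\<phi> x - \<phi> (hd xs)\<bar> \<le> 1" using lip e .
    ultimately show ?thesis using False by simp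
  qed
qed

lemma walk_rev:
  assumes "is_walk V E xs" and sym: "\<And>x y. E x y \<Longrightarrow> E y x"
  shows "is_walk V E (rev xs)"
  using assms(1) unfolding is_walk_def
proof (intro conjI allI impI)
  fix i assume h: "xs \<noteq> [] \<and> set xs \<subseteq> V \<and> (\<forall>i. Suc i < length xs \<longrightarrow> E (xs ! i) (xs ! Suc i))"
    and i: "Suc i < length (rev xs)"
  have "E (xs ! (length xs - Suc (Suc i))) (xs ! Suc (length xs - Suc (Suc i)))"
    using h i by simp
  moreover have "Suc (length xs - Suc (Suc i)) = length xs - Suc i" using i by simp
  ultimately show "E (rev xs ! i) (rev xs ! Suc i)" using i sym by (simp add: rev_nth)
qed auto

lemma dist_sym:
  assumes "graph_dist_is V E u v k" and sym: "\<And>x y. E x y \<Longrightarrow> E y x"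
  shows "graph_dist_is V E v u k"
proof -
  from assms(1) obtain xs where xs: "is_walk V E xs" "hd xs = u" "last xs = v" "length xs = Suc k"
    unfolding graph_dist_is_def by blast
  have "is_walk V E (rev xs)" using walk_rev[OF xs(1) sym] by blast
  moreover have "xs \<noteq> []" using xs(1) by (simp add: is_walk_def)
  ultimately have A: "\<exists>ys. is_walk V E ys \<and> hd ys = v \<and> last ys = u \<and> length ys = Suc k"
    using xs by (intro exI[of _ "rev xs"]) (simp add: hd_rev last_rev)
  have B: "\<forall>ys. is_walk V E ys \<and> hd ys = v \<and> last ys = u \<longrightarrow> Suc k \<le> length ys"
  proof (intro allI impI)
    fix ys assume h: "is_walk V E ys \<and> hd ys = v \<and> last ys = u"
    then have "ys \<noteq> []" by (simp add: is_walk_def)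
    then have "is_walk V E (rev ys) \<and> hd (rev ys) = u \<and> last (rev ys) = v"
      using h walk_rev[of V E ys] sym by (simp add: hd_rev last_rev)
    then show "Suc k \<le> length ys" using assms(1) unfolding graph_dist_is_def
      by (metis length_rev)
  qed
  show ?thesis using A B unfolding graph_dist_is_def by blast
qed

definition CC :: "nat \<Rightarrow> nat set" where "CC l = insert 0 {l..<2*l}"
definition EE :: "nat \<Rightarrow> nat \<Rightarrow> nat \<Rightarrow> bool" where
  "EE l u v \<longleftrightarrow> u \<noteq> v \<and> ((u \<in> CC l \<and> v \<in> CC l) \<or> (u < l \<and> v < l \<and> (u = Suc v \<or> v = Suc u)))"
definition FF :: "nat \<Rightarrow> nat \<Rightarrow> nat" where "FF l v = (if v < l then v + 1 else v + 1 - l)"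

lemma EE_sym: "EE l x y \<Longrightarrow> EE l y x" unfolding EE_def by auto

lemma sg: "l \<ge> 1 \<Longrightarrow> simple_graph {..<2*l} (EE l)"
  unfolding simple_graph_def EE_def CC_def by auto

lemma size_eq: assumes "l \<ge> 1"
  shows "graph_size {..<2*l} (EE l) = (l + 2) * (l + 1) div 2 - 2"
proof -
  let ?A = "{B. B \<subseteq> CC l \<and> card B = 2}"
  let ?P = "(\<lambda>i. {i, Suc i}) ` {..<l-1}"
  have eq: "{{u, v} | u v. u \<in> {..<2*l} \<and> v \<in> {..<2*l} \<and> EE l u v} = ?A \<union> ?P"
  proof (intro equalityI subsetI)
    fix B assume "B \<in> {{u, v} | u v. u \<in> {..<2*l} \<and> v \<in> {..<2*l} \<and> EE l u v}"
    then obtain u v where B: "B = {u,v}" "EE l u v" by blast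
    show "B \<in> ?A \<union> ?P"
    proof (cases "u \<in> CC l \<and> v \<in> CC l")
      case True then show ?thesis using B by (auto simp: EE_def)
    next
      case False
      then have "u < l \<and> v < l \<and> (u = Suc v \<or> v = Suc u)" using B by (auto simp: EE_def)
      then show ?thesis using B by (auto simp: image_iff insert_commute)
    qed
  next
    fix B assume "B \<in> ?A \<union> ?P"
    then show "B \<in> {{u, v} | u v. u \<in> {..<2*l} \<and> v \<in> {..<2*l} \<and> EE l u v}"
    proof
      assume "B \<in> ?A"
      then obtain x y where "B = {x,y}" "x \<noteq> y" "x \<in> CC l" "y \<in> CC l" by (auto simp: card_2_iff)
      then have "x < 2*l" "y < 2*l" using assms by (auto simp: CC_def)
      then show ?thesis using \<open>B = {x,y}\<close> \<open>x \<noteq> y\<close> \<open>x \<in> CC l\<close> \<open>y \<in> CC l\<close>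
      proof -
        have "{x,y} = {x,y} \<and> x \<in> {..<2*l} \<and> y \<in> {..<2*l} \<and> EE l x y"
          using \<open>x < 2*l\<close> \<open>y < 2*l\<close> \<open>x \<noteq> y\<close> \<open>x \<in> CC l\<close> \<open>y \<in> CC l\<close> by (simp add: EE_def)
        then show ?thesis using \<open>B = {x,y}\<close> unfolding mem_Collect_eq by (intro exI[of _ x] exI[of _ y]) simp
      qed
    next
      assume "B \<in> ?P"
      then obtain i where "B = {i, Suc i}" "i < l - 1" by auto
      then have "{i, Suc i} = {i, Suc i} \<and> i \<in> {..<2*l} \<and> Suc i \<in> {..<2*l} \<and> EE l i (Suc i)"
        unfolding EE_def by auto
      then show ?thesis using \<open>B = {i, Suc i}\<close> unfolding mem_Collect_eq by (intro exI[of _ i] exI[of _ "Suc i"]) simp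
    qed
  qed
  have disj: "?A \<inter> ?P = {}" by (auto simp: CC_def)
  have fin: "finite (CC l)" by (simp add: CC_def)
  have cC: "card (CC l) = l + 1" using assms by (simp add: CC_def)
  have cA: "card ?A = (l+1) * l div 2" using n_subsets[OF fin, of 2] cC by (simp add: choose_two)
  have inj: "inj_on (\<lambda>i. {i, Suc i}) {..<l-1}" by (auto simp: inj_on_def doubleton_eq_iff)
  have cP: "card ?P = l - 1" using card_image[OF inj] by simp
  have finA: "finite ?A" using fin by simp
  have "card (?A \<union> ?P) = (l+1)*l div 2 + (l - 1)"
    using card_Un_disjoint[OF finA _ disj] cA cP by simp
  moreover have "(l + 2) * (l + 1) = (l+1)*l + 2*(l+1)" by (simp add: algebra_simps)
  hence "(l + 2) * (l + 1) div 2 = (l+1)*l div 2 + (l+1)" by simp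
  ultimately show ?thesis using assms unfolding graph_size_def eq by simp
qed

lemma dist_pair:
  assumes "1 \<le> k" "k \<le> l"
  shows "graph_dist_is {..<2*l} (EE l) (k - 1) (l + k - 1) k"
proof -
  define xs where "xs = map (\<lambda>i. if i < k then k - 1 - i else l + k - 1) [0..<Suc k]"
  have len: "length xs = Suc k" by (simp add: xs_def)
  have nth: "\<And>i. i < Suc k \<Longrightarrow> xs ! i = (if i < k then k - 1 - i else l + k - 1)"
    by (simp add: xs_def nth_map del: upt_Suc)
  have w: "is_walk {..<2*l} (EE l) xs"
    unfolding is_walk_def
  proof (intro conjI allI impI)
    show "xs \<noteq> []" using len by auto
    show "set xs \<subseteq> {..<2*l}" using assms by (auto simp: xs_def)
  next
    fix i assume i: "Suc i < length xs"
    show "EE l (xs ! i) (xs ! Suc i)"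
    proof (cases "Suc i < k")
      case True then show ?thesis using i len nth[of i] nth[of "Suc i"] assms
        by (auto simp: EE_def)
    next
      case False then have "i = k - 1" using i len by simp
      then show ?thesis using i len nth[of i] nth[of "Suc i"] assms
        by (auto simp: EE_def CC_def)
    qed
  qed
  have hd: "hd xs = k - 1" using nth[of 0] len assms hd_conv_nth[of xs] by fastforce
  have lst: "last xs = l + k - 1" using nth[of k] len last_conv_nth[of xs] by fastforce
  define \<phi> where "\<phi> x = (if x = l + k - 1 then 0 else if x < l then int x + 1 else (1::int))" for x
  have lip: "\<And>x y. EE l x y \<Longrightarrow> \<bar>\<phi> x - \<phi> y\<bar> \<le> 1"
    unfolding \<phi>_def EE_def CC_def using assms by auto
  have lower: "\<forall>ys. is_walk {..<2*l} (EE l) ys \<and> hd ys = k - 1 \<and> last ys = l + k - 1 \<longrightarrow> Suc k \<le> length ys"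
  proof (intro allI impI)
    fix ys assume h: "is_walk {..<2*l} (EE l) ys \<and> hd ys = k - 1 \<and> last ys = l + k - 1"
    have "\<bar>\<phi> (hd ys) - \<phi> (last ys)\<bar> \<le> int (length ys) - 1" using walk_lip[of _ _ ys \<phi>] h lip by blast
    moreover have "\<phi> (hd ys) = int k" "\<phi> (last ys) = 0" using h assms by (auto simp: \<phi>_def)
    ultimately show "Suc k \<le> length ys" by simp
  qed
  show ?thesis unfolding graph_dist_is_def using w hd lst len lower by blast
qed

lemma labeling: assumes "l \<ge> 1"
  shows "regular_distance_labeling {..<2*l} (EE l) l 2 (FF l)"
  unfolding regular_distance_labeling_def distance_labeling_def
proof (intro conjI ballI impI disjI2)
  show "FF l ` {..<2*l} = {1..l}"
  proof (intro equalityI subsetI)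
    fix y assume "y \<in> FF l ` {..<2*l}" then show "y \<in> {1..l}" by (auto simp: FF_def)
  next
    fix y assume y: "y \<in> {1..l}"
    then have "y - 1 < 2*l" "FF l (y - 1) = y" by (auto simp: FF_def)
    then show "y \<in> FF l ` {..<2*l}" by (metis image_eqI lessThan_iff)
  qed
next
  fix k assume k: "k \<in> {1..l}"
  have "{v \<in> {..<2*l}. FF l v = k} = {k - 1, l + k - 1}"
    using k by (auto simp: FF_def)
  moreover have "k - 1 \<noteq> l + k - 1" using k by auto
  ultimately show "card {v \<in> {..<2*l}. FF l v = k} = 2" by simp
next
  fix u v assume uv: "u \<in> {..<2*l}" "v \<in> {..<2*l}" "u \<noteq> v \<and> FF l u = FF l v"
  show "graph_dist_is {..<2*l} (EE l) u v (FF l u)"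
  proof (cases "u < l")
    case True
    then have "v \<ge> l" using uv by (auto simp: FF_def split: if_splits)
    then have "v = l + (u+1) - 1" "FF l u = u + 1" using uv True by (auto simp: FF_def split: if_splits)
    then show ?thesis using dist_pair[of "u+1" l] True by simp
  next
    case False
    then have "v < l" using uv by (auto simp: FF_def split: if_splits)
    then have "u = l + (v+1) - 1" "FF l u = v + 1" using uv False by (auto simp: FF_def split: if_splits)
    then show ?thesis using dist_pair[of "v+1" l] \<open>v < l\<close> dist_sym[OF _ EE_sym] by simp
  qed
qed

theorem mainTheorem6:
  fixes l :: nat
  assumes "l \<ge> 1"
  shows "\<exists>(V :: nat set) E f. simple_graph V E \<and> graph_order V E = 2 * l
           \<and> graph_size V E = (l + 2) * (l + 1) div 2 - 2
           \<and> regular_distance_labeling V E l 2 f"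
  using sg[OF assms] size_eq[OF assms] labeling[OF assms]
  by (intro exI[of _ "{..<2*l}"] exI[of _ "EE l"] exI[of _ "FF l"]) (simp add: graph_order_def)

end
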